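(* Let $n\ge 4$ and let $D_1,\dots,D_{n-1}$ be positive numbers satisfying $D_kD_{l-j}\ge D_jD_{l-k}+D_lD_{k-j}$ for all integers $1\le j<k<l\le n-1$. Put $s_k=\sin(k\pi/n)$ and $a_k=\log(D_k/s_k)$. Then for all $1\le j<k<l\le n-1$, $$a_k+a_{l-j}\ \ge\ \frac{s_js_{l-k}}{s_ks_{l-j}}\,(a_j+a_{l-k})+\frac{s_ls_{k-j}}{s_ks_{l-j}}\,(a_l+a_{k-j}).$$ *)

theory Defs
  imports Complex_Main
begin

end

theory Submission
  imports Defs
begin

lemma ptol: "sin (K::real) * sin (L - J) = sin J * sin (L - K) + sin L * sin (K - J)"
  by (simp add: sin_diff algebra_simps)

lemma exp_tan: "exp m * (1 + (u - m)) \<le> exp (u::real)"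
proof -
  have "exp u = exp m * exp (u - m)" by (simp add: exp_add[symmetric])
  moreover have "exp m * (1 + (u - m)) \<le> exp m * exp (u - m)"
    by (intro mult_left_mono exp_ge_add_one_self) auto
  ultimately show ?thesis by simp
qed

lemma expconv:
  assumes "al \<ge> 0" "be \<ge> 0" "al + be = 1"
  shows "exp (al * u + be * v) \<le> al * exp u + be * exp (v::real)"
proof -
  define m where "m = al * u + be * v"
  have "al * (exp m * (1 + (u - m))) + be * (exp m * (1 + (v - m))) \<le> al * exp u + be * exp v"
    using exp_tan[of m u] exp_tan[of m v] assms by (intro add_mono mult_left_mono) auto
  moreover have "al * (exp m * (1 + (u - m))) + be * (exp m * (1 + (v - m))) = exp m"
  proof -
    have "al * (exp m * (1 + (u - m))) + be * (exp m * (1 + (v - m)))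
       = exp m * ((al + be) + (al * u + be * v) - (al + be) * m)" by (simp add: algebra_simps)
    also have "\<dots> = exp m" using assms(3) by (simp add: m_def)
    finally show ?thesis .
  qed
  ultimately show ?thesis by (simp add: m_def)
qed

theorem mainTheorem10:
  fixes n :: nat and D s a :: "nat \<Rightarrow> real"
  assumes n4: "n \<ge> 4"
    and Dpos: "\<And>k. 1 \<le> k \<Longrightarrow> k \<le> n - 1 \<Longrightarrow> D k > 0"
    and Dineq: "\<And>j k l. 1 \<le> j \<Longrightarrow> j < k \<Longrightarrow> k < l \<Longrightarrow> l \<le> n - 1 \<Longrightarrow>
                 D k * D (l - j) \<ge> D j * D (l - k) + D l * D (k - j)"
    and s_def: "\<And>k. s k = sin (real k * pi / real n)"
    and a_def: "\<And>k. a k = ln (D k / s k)"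
  shows "\<forall>j k l. 1 \<le> j \<and> j < k \<and> k < l \<and> l \<le> n - 1 \<longrightarrow>
           a k + a (l - j) \<ge>
             (s j * s (l - k)) / (s k * s (l - j)) * (a j + a (l - k))
           + (s l * s (k - j)) / (s k * s (l - j)) * (a l + a (k - j))"
proof (intro allI impI)
  fix j k l assume h: "1 \<le> j \<and> j < k \<and> k < l \<and> l \<le> n - 1"
  have spos: "s i > 0" if "1 \<le> i" "i \<le> n - 1" for i
  proof -
    have "real i < real n" using that n4 by linarith
    hence "real i * pi / real n < pi" using n4 by (simp add: field_simps)
    moreover have "0 < real i * pi / real n" using that n4 by simp
    ultimately show ?thesis unfolding s_def by (intro sin_gt_zero) auto
  qed
  have ex: "exp (a i) = D i / s i" if "1 \<le> i" "i \<le> n - 1" for i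
    using Dpos[OF that] spos[OF that] unfolding a_def by simp
  define x where "x = pi / real n"
  have sx: "s i = sin (real i * x)" for i unfolding s_def x_def by simp
  have pt: "s k * s (l - j) = s j * s (l - k) + s l * s (k - j)"
    using h ptol[of "real k * x" "real l * x" "real j * x"]
    by (simp add: sx of_nat_diff left_diff_distrib)
  have p1: "s k > 0" "s (l-j) > 0" "s j > 0" "s (l-k) > 0" "s l > 0" "s (k-j) > 0"
    using h by (auto intro!: spos)
  have d1: "D k > 0" "D (l-j) > 0" "D j > 0" "D (l-k) > 0" "D l > 0" "D (k-j) > 0"
    using h by (auto intro!: Dpos)
  have exs: "exp (a k) = D k / s k" "exp (a (l-j)) = D (l-j) / s (l-j)" "exp (a j) = D j / s j"
    "exp (a (l-k)) = D (l-k) / s (l-k)" "exp (a l) = D l / s l" "exp (a (k-j)) = D (k-j) / s (k-j)"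
    using h by (auto intro!: ex)
  define S where "S = s k * s (l - j)"
  have Sp: "S > 0" using p1 by (simp add: S_def)
  define al where "al = (s j * s (l - k)) / S"
  define be where "be = (s l * s (k - j)) / S"
  have al0: "al \<ge> 0" "be \<ge> 0" using p1 Sp by (auto simp: al_def be_def)
  have ab1: "al + be = 1" using pt Sp by (simp add: al_def be_def S_def add_divide_distrib[symmetric])
  have eL: "exp (a k + a (l - j)) = D k * D (l - j) / S"
    using h p1 by (simp add: exp_add exs S_def)
  have eX: "al * exp (a j + a (l - k)) = D j * D (l - k) / S"
    using h p1 by (simp add: exp_add exs al_def)
  have eY: "be * exp (a l + a (k - j)) = D l * D (k - j) / S"
    using h p1 by (simp add: exp_add exs be_def)
  have "exp (al * (a j + a (l - k)) + be * (a l + a (k - j)))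
      \<le> al * exp (a j + a (l - k)) + be * exp (a l + a (k - j))"
    by (rule expconv[OF al0 ab1])
  also have "\<dots> = (D j * D (l - k) + D l * D (k - j)) / S"
    by (simp add: eX eY add_divide_distrib)
  also have "\<dots> \<le> D k * D (l - j) / S"
    using Dineq[of j k l] h Sp by (intro divide_right_mono) auto
  also have "\<dots> = exp (a k + a (l - j))" by (simp add: eL)
  finally have "al * (a j + a (l - k)) + be * (a l + a (k - j)) \<le> a k + a (l - j)" by simp
  thus "a k + a (l - j) \<ge>
             (s j * s (l - k)) / (s k * s (l - j)) * (a j + a (l - k))
           + (s l * s (k - j)) / (s k * s (l - j)) * (a l + a (k - j))"
    by (simp add: al_def be_def S_def)
qed

end
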